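(* Let $0<|b_0|<\frac{2}{3\sqrt3}$ and $p(x,\xi)=\xi_0^3-(\xi_1^2+x_1^2\xi_n^2)\xi_0-b_0x_1^3\xi_n^3$ on $T^*\mathbb{R}^{n+1}$, and let $\Sigma_3=\{x_1=\xi_0=\xi_1=0\}$ (near points with $\xi_n\neq0$). For every $z\in\Sigma_3$ with $\xi_n\ne0$, the propagation cone $C_z$ contains a nonzero vector of $T_z\Sigma_3$, and $C_z$ is not contained in $T_z\Sigma_3$. In particular, $C_z$ is not transversal to $\Sigma_3$.
   Context: For a point $z$ where $p$ vanishes to order exactly $3$, the localization $p_z(X)$ is the lowest (third) order term of the Taylor expansion of $p$ at $z$, a polynomial on $T_z(T^*\mathbb{R}^{n+1})$. Since $p$ is hyperbolic with respect to $\xi_0$, the hyperbolicity cone $\Gamma_z$ is the connected component containing $N=(0;1,0,\dots,0)$ (i.e. $\delta\xi_0=1$, all other components $0$) of $\{X\in T_z(T^*\mathbb{R}^{n+1}):p_z(X)\ne0\}$. The propagation cone is $C_z=\{X\in T_z(T^*\mathbb{R}^{n+1}):\sigma(X,Y)\le0\ \forall Y\in\Gamma_z\}$, where $\sigma$ is the canonical symplectic form on $T^*\mathbb{R}^{n+1}$. $p$ vanishes exactly to order $3$ on $\Sigma_3$ under the assumption on $b_0$. *)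

theory Defs
  imports "HOL-Analysis.Analysis"
begin

text \<open>Points of the cotangent bundle T*R^(n+1) with coordinates
  (x_0,...,x_n; xi_0,...,xi_n) are modelled as pairs (x, xi) of functions
  nat => real that vanish at indices > n.  Since T*R^(n+1) is a vector space,
  each tangent space T_z(T*R^(n+1)) is identified with the same set.
  Topology: the (product) topology on nat => real, restricted to this set,
  which is the Euclidean topology of R^(2n+2).\<close>

type_synonym cpt = "(nat \<Rightarrow> real) \<times> (nat \<Rightarrow> real)"

definition phase_space :: "nat \<Rightarrow> cpt set" where
  "phase_space n = {(x, \<xi>). \<forall>i>n. x i = 0 \<and> \<xi> i = 0}"

definition symp :: "nat \<Rightarrow> cpt \<Rightarrow> cpt \<Rightarrow> real" where
  "symp n X Y = (\<Sum>i\<le>n. snd X i * fst Y i - fst X i * snd Y i)"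

definition shift :: "cpt \<Rightarrow> real \<Rightarrow> cpt \<Rightarrow> cpt" where
  "shift z t X = ((\<lambda>i. fst z i + t * fst X i), (\<lambda>i. snd z i + t * snd X i))"

text \<open>Localization at a point of vanishing order 3: the third order term of the
  Taylor expansion of p at z, i.e. (1/3!) (d/dt)^3 p(z + tX) at t = 0.\<close>
definition localization3 :: "(cpt \<Rightarrow> real) \<Rightarrow> cpt \<Rightarrow> cpt \<Rightarrow> real" where
  "localization3 p z X = (deriv ^^ 3) (\<lambda>t. p (shift z t X)) 0 / 6"

definition Nvec :: cpt where
  "Nvec = ((\<lambda>_. 0), (\<lambda>i. if i = 0 then 1 else 0))"

definition hyp_cone :: "nat \<Rightarrow> (cpt \<Rightarrow> real) \<Rightarrow> cpt \<Rightarrow> cpt set" where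
  "hyp_cone n p z =
     connected_component_set {X \<in> phase_space n. localization3 p z X \<noteq> 0} Nvec"

definition prop_cone :: "nat \<Rightarrow> (cpt \<Rightarrow> real) \<Rightarrow> cpt \<Rightarrow> cpt set" where
  "prop_cone n p z = {X \<in> phase_space n. \<forall>Y \<in> hyp_cone n p z. symp n X Y \<le> 0}"

definition p_ex :: "nat \<Rightarrow> real \<Rightarrow> cpt \<Rightarrow> real" where
  "p_ex n b0 z = (let x = fst z; \<xi> = snd z in
     \<xi> 0 ^ 3 - (\<xi> 1 ^ 2 + x 1 ^ 2 * \<xi> n ^ 2) * \<xi> 0 - b0 * x 1 ^ 3 * \<xi> n ^ 3)"

definition Sigma3 :: "nat \<Rightarrow> cpt set" where
  "Sigma3 n = {z \<in> phase_space n. fst z 1 = 0 \<and> snd z 0 = 0 \<and> snd z 1 = 0}"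

text \<open>Tangent space T_z Sigma_3 (Sigma_3 is a linear subspace, so it is the
  same linear subspace for every z in Sigma_3).\<close>
definition tangent_Sigma3 :: "nat \<Rightarrow> cpt \<Rightarrow> cpt set" where
  "tangent_Sigma3 n z = {X \<in> phase_space n. fst X 1 = 0 \<and> snd X 0 = 0 \<and> snd X 1 = 0}"

end

theory Submission
  imports Defs "HOL-Computational_Algebra.Polynomial"
begin


lemma deriv3_poly: "(deriv ^^ 3) (\<lambda>t. poly p t) = (\<lambda>t. poly (pderiv (pderiv (pderiv p))) t)"
proof -
  have d: "\<And>q. deriv (\<lambda>t. poly q t) = (\<lambda>t. poly (pderiv q) t)"
    by (rule ext, rule DERIV_imp_deriv, simp)
  show ?thesis by (simp add: numeral_3_eq_3 d)
qed

lemma loc3_coef: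
  "(deriv ^^ 3) (\<lambda>t. \<alpha>3 * t^3 + \<alpha>4 * t^4 + \<alpha>5 * t^5 + \<alpha>6 * t^6) 0 / 6 = (\<alpha>3::real)"
proof -
  have "(\<lambda>t. \<alpha>3 * t^3 + \<alpha>4 * t^4 + \<alpha>5 * t^5 + \<alpha>6 * t^6) = (\<lambda>t. poly [:0,0,0,\<alpha>3,\<alpha>4,\<alpha>5,\<alpha>6:] t)"
    by (rule ext) (simp add: algebra_simps power_def numeral_eq_Suc)
  then show ?thesis by (simp only: deriv3_poly) (simp add: pderiv_pCons)
qed

lemma loc_formula:
  assumes "n \<ge> 2" "z \<in> Sigma3 n"
  shows "localization3 (p_ex n b0) z X =
    snd X 0 ^ 3 - (snd X 1 ^ 2 + (snd z n * fst X 1)^2) * snd X 0 - b0 * (snd z n * fst X 1)^3"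
proof -
  define a b d e c where "a = snd X 0" and "b = snd X 1" and "d = fst X 1" and "e = snd X n" and "c = snd z n"
  have z: "fst z 1 = 0" "snd z 0 = 0" "snd z 1 = 0" "fst z (Suc 0) = 0" "snd z (Suc 0) = 0" using assms(2) by (auto simp: Sigma3_def)
  have 1: "p_ex n b0 (shift z t X) = (t*a)^3 - ((t*b)^2 + (t*d)^2*(c+t*e)^2)*(t*a) - b0*(t*d)^3*(c+t*e)^3" for t
    by (simp add: p_ex_def shift_def z Let_def a_def b_def c_def d_def e_def)
  have 2: "(t*a)^3 - ((t*b)^2 + (t*d)^2*(c+t*e)^2)*(t*a) - b0*(t*d)^3*(c+t*e)^3 = 
     (a^3 - b^2*a - d^2*a*c^2 - b0*d^3*c^3) * t^3
   + (- (2*d^2*a*c*e) - 3*b0*d^3*c^2*e) * t^4 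
   + (- (d^2*a*e^2) - 3*b0*d^3*c*e^2) * t^5 + (- (b0*d^3*e^3)) * t^6" for t
    by algebra
  have "(\<lambda>t. p_ex n b0 (shift z t X)) = (\<lambda>t.
     (a^3 - b^2*a - d^2*a*c^2 - b0*d^3*c^3) * t^3
   + (- (2*d^2*a*c*e) - 3*b0*d^3*c^2*e) * t^4 
   + (- (d^2*a*e^2) - 3*b0*d^3*c*e^2) * t^5 + (- (b0*d^3*e^3)) * t^6)"
    using 1 2 by auto
  then show ?thesis unfolding localization3_def
    by (simp only: loc3_coef) (simp add: a_def b_def c_def d_def algebra_simps power2_eq_square power3_eq_cube)
qed

lemma key:
  fixes a b w b0 :: real
  assumes b0: "\<bar>b0\<bar> < 2 / (3 * sqrt 3)"
    and a: "a \<ge> 0" and q: "3*a^2 \<ge> b^2 + w^2"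
    and P: "a^3 - (b^2 + w^2)*a - b0*w^3 > 0"
  shows "a > 0 \<and> 3*a^2 > b^2 + w^2"
proof -
  have "a \<noteq> 0"
  proof
    assume "a = 0"
    with q have "b^2 + w^2 \<le> 0" by simp
    then have "w^2 \<le> 0" using zero_le_power2[of b] by linarith
    then have "w = 0" by simp
    with P \<open>a = 0\<close> show False by simp
  qed
  with a have a0: "a > 0" by simp
  moreover have "3*a^2 \<noteq> b^2 + w^2"
  proof
    assume e: "3*a^2 = b^2 + w^2"
    then have Pe: "a^3 - (b^2 + w^2)*a - b0*w^3 = -2*a^3 - b0*w^3"
      by (simp add: power3_eq_cube power2_eq_square algebra_simps)
    have w2: "w^2 \<le> (sqrt 3 * a)^2" using e by (simp add: power_mult_distrib)
    have "sqrt (w^2) \<le> sqrt ((sqrt 3 * a)^2)" using w2 by (rule real_sqrt_le_mono)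
    then have wa: "\<bar>w\<bar> \<le> sqrt 3 * a" using a0 by simp
    have "\<bar>w\<bar>^3 \<le> (sqrt 3 * a)^3" using wa by (simp add: power_mono)
    also have "\<dots> = 3 * sqrt 3 * a^3" by (simp add: power_mult_distrib power3_eq_cube)
    finally have w3: "\<bar>w\<bar>^3 \<le> 3 * sqrt 3 * a^3" .
    have "\<bar>b0 * w^3\<bar> = \<bar>b0\<bar> * \<bar>w\<bar>^3" by (simp add: abs_mult power_abs)
    also have "\<dots> \<le> \<bar>b0\<bar> * (3 * sqrt 3 * a^3)" using w3 by (simp add: mult_left_mono)
    also have "\<dots> < (2 / (3 * sqrt 3)) * (3 * sqrt 3 * a^3)"
      using b0 a0 by (intro mult_strict_right_mono) auto
    also have "\<dots> = 2 * a^3" by simp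
    finally have "\<bar>b0 * w^3\<bar> < 2*a^3" .
    then show False using P Pe by linarith
  qed
  ultimately show ?thesis using q by simp
qed

lemma cont_snd: "continuous_on UNIV (\<lambda>Y::cpt. snd Y i)"
  by (rule continuous_on_compose2[of UNIV "\<lambda>f. f i"]) (auto intro: continuous_intros)
lemma cont_fst: "continuous_on UNIV (\<lambda>Y::cpt. fst Y i)"
  by (rule continuous_on_compose2[of UNIV "\<lambda>f. f i"]) (auto intro: continuous_intros)

lemma cone_props:
  assumes n: "n \<ge> 2" and b0: "\<bar>b0\<bar> < 2 / (3 * sqrt 3)" and z: "z \<in> Sigma3 n"
    and Y: "Y \<in> hyp_cone n (p_ex n b0) z"
  shows "Y \<in> phase_space n \<and> snd Y 0 > 0 \<and> (snd Y 1)^2 + (snd z n * fst Y 1)^2 < 3*(snd Y 0)^2"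
proof -
  define c where "c = snd z n"
  define P where "P Y = snd Y 0 ^ 3 - (snd Y 1 ^ 2 + (c * fst Y 1)^2) * snd Y 0 - b0 * (c * fst Y 1)^3" for Y :: cpt
  define S where "S = {X \<in> phase_space n. P X \<noteq> 0}"
  define K where "K = connected_component_set S Nvec"
  have KH: "hyp_cone n (p_ex n b0) z = K"
    unfolding hyp_cone_def K_def S_def P_def c_def using loc_formula[OF n z] by simp
  define A where "A = {Y::cpt. 0 < snd Y 0 \<and> (snd Y 1)^2 + (c*fst Y 1)^2 < 3*(snd Y 0)^2 \<and> 0 < P Y}"
  define F where "F = {Y::cpt. 0 \<le> snd Y 0 \<and> (snd Y 1)^2 + (c*fst Y 1)^2 \<le> 3*(snd Y 0)^2 \<and> 0 \<le> P Y}"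
  have cP: "continuous_on UNIV P" unfolding P_def
    by (intro continuous_intros cont_snd cont_fst)
  have c1: "continuous_on UNIV (\<lambda>Y::cpt. (snd Y 1)^2 + (c*fst Y 1)^2)"
    by (intro continuous_intros cont_snd cont_fst)
  have c2: "continuous_on UNIV (\<lambda>Y::cpt. 3*(snd Y 0)^2)"
    by (intro continuous_intros cont_snd cont_fst)
  have oA: "open A" unfolding A_def Collect_conj_eq
    by (intro open_Int open_Collect_less cP c1 c2 cont_snd continuous_on_const)
  have cF: "closed F" unfolding F_def Collect_conj_eq
    by (intro closed_Int closed_Collect_le cP c1 c2 cont_snd continuous_on_const)
  define B where "B = - F"
  have oB: "open B" using cF unfolding B_def by (simp add: open_Compl)
  have AF: "A \<subseteq> F" unfolding A_def F_def by auto
  have SAB: "S \<subseteq> A \<union> B"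
  proof
    fix X assume X: "X \<in> S"
    show "X \<in> A \<union> B"
    proof (cases "X \<in> F")
      case True
      then have h: "0 \<le> snd X 0" "(snd X 1)^2 + (c*fst X 1)^2 \<le> 3*(snd X 0)^2" "0 < P X"
        using X unfolding F_def S_def by auto
      have "0 < snd X 0 \<and> 3*(snd X 0)^2 > (snd X 1)^2 + (c*fst X 1)^2"
        by (rule key[OF b0 h(1) h(2)]) (use h(3) in \<open>simp add: P_def\<close>)
      then show ?thesis using h(3) unfolding A_def by auto
    qed (auto simp: B_def)
  qed
  have NS: "Nvec \<in> S" unfolding S_def P_def Nvec_def phase_space_def by simp
  have NK: "Nvec \<in> K" unfolding K_def using NS by simp
  have NA: "Nvec \<in> A" unfolding A_def P_def Nvec_def by simp
  have conK: "connected K" unfolding K_def by (rule connected_connected_component)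
  have KS: "K \<subseteq> S" unfolding K_def by (rule connected_component_subset)
  have "K \<subseteq> A"
  proof (rule ccontr)
    assume "\<not> K \<subseteq> A"
    then obtain Y where "Y \<in> K" "Y \<notin> A" by auto
    then have "Y \<in> B" using KS SAB by auto
    then have "B \<inter> K \<noteq> {}" using \<open>Y \<in> K\<close> by auto
    moreover have "A \<inter> K \<noteq> {}" using NK NA by auto
    moreover have "A \<inter> B \<inter> K = {}" using AF unfolding B_def by auto
    moreover have "K \<subseteq> A \<union> B" using KS SAB by auto
    ultimately show False using conK oA oB unfolding connected_def by blast
  qed
  then show ?thesis using Y KS unfolding KH A_def S_def c_def by auto
qed

theorem mainTheorem9:
  fixes n :: nat and b0 :: real and z :: cpt
  assumes "n \<ge> 2"
    and "0 < \<bar>b0\<bar>" and "\<bar>b0\<bar> < 2 / (3 * sqrt 3)"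
    and "z \<in> Sigma3 n" and "snd z n \<noteq> 0"
  shows "(\<exists>X \<in> prop_cone n (p_ex n b0) z. X \<in> tangent_Sigma3 n z \<and> X \<noteq> ((\<lambda>_. 0), (\<lambda>_. 0)))
         \<and> \<not> prop_cone n (p_ex n b0) z \<subseteq> tangent_Sigma3 n z"
proof -
  note CP = cone_props[OF assms(1) assms(3) assms(4)]
  define X1 :: cpt where "X1 = ((\<lambda>i. if i = 0 then 1 else 0), (\<lambda>_. 0))"
  define X2 :: cpt where "X2 = ((\<lambda>i. if i = 0 then 1 else if i = 1 then 1/2 else 0), (\<lambda>_. 0))"
  have n1: "1 \<le> n" "(1::nat) \<in> {..n}" "(0::nat) \<in> {..n}" using assms(1) by auto
  have s1: "symp n X1 Y = - snd Y 0" for Y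
  proof -
    have "symp n X1 Y = (\<Sum>i\<le>n. - (if i = 0 then snd Y i else 0))"
      unfolding symp_def X1_def by (intro sum.cong) auto
    also have "\<dots> = - snd Y 0" by (simp add: sum_negf)
    finally show ?thesis .
  qed
  have s2: "symp n X2 Y = - snd Y 0 - snd Y 1 / 2" for Y
  proof -
    have "symp n X2 Y = (\<Sum>i\<le>n. - (if i = 0 then snd Y i else 0) - (if i = 1 then snd Y i / 2 else 0))"
      unfolding symp_def X2_def by (intro sum.cong) auto
    also have "\<dots> = - snd Y 0 - snd Y 1 / 2" using n1
      by (simp add: sum_subtractf sum_negf)
    finally show ?thesis .
  qed
  have X1C: "X1 \<in> prop_cone n (p_ex n b0) z"
    unfolding prop_cone_def
  proof (intro CollectI conjI ballI)
    show "X1 \<in> phase_space n" unfolding X1_def phase_space_def by auto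
    fix Y assume "Y \<in> hyp_cone n (p_ex n b0) z"
    then have "snd Y 0 > 0" using CP by blast
    then show "symp n X1 Y \<le> 0" using s1[of Y] by linarith
  qed
  have X2C: "X2 \<in> prop_cone n (p_ex n b0) z"
    unfolding prop_cone_def
  proof (intro CollectI conjI ballI)
    show "X2 \<in> phase_space n" unfolding X2_def phase_space_def using n1 by auto
    fix Y assume "Y \<in> hyp_cone n (p_ex n b0) z"
    then have h0: "snd Y 0 > 0" "(snd Y 1)^2 + (snd z n * fst Y 1)^2 < 3*(snd Y 0)^2" using CP by blast+
    have h: "snd Y 0 > 0" "(snd Y 1)^2 < 3*(snd Y 0)^2" using h0 zero_le_power2[of "snd z n * fst Y 1"] by linarith+
    have e4: "(2 * snd Y 0)^2 = 4 * (snd Y 0)^2" by (simp add: power_mult_distrib)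
    have "(snd Y 1)^2 < (2 * snd Y 0)^2" unfolding e4 using h zero_le_power2[of "snd Y 0"] by linarith
    then have "\<bar>snd Y 1\<bar> < 2 * snd Y 0" using h(1)
      by (metis abs_of_nonneg less_le power2_less_imp_less abs_ge_zero power2_abs mult_nonneg_nonneg zero_le_numeral)
    then show "symp n X2 Y \<le> 0" unfolding s2 by linarith
  qed
  have "X1 \<in> tangent_Sigma3 n z" unfolding X1_def tangent_Sigma3_def phase_space_def by auto
  moreover have "X1 \<noteq> ((\<lambda>_. 0), (\<lambda>_. 0))" unfolding X1_def by (auto simp: fun_eq_iff)
  moreover have "X2 \<notin> tangent_Sigma3 n z" unfolding X2_def tangent_Sigma3_def by auto
  ultimately show ?thesis using X1C X2C by blast
qed

end
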